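(* Let $G=(V,E)$ be a finite simple undirected graph and let $S$ be a total clique covering of $G$. Then there exists a coding sequence $\sigma$ of $G$ such that $S=S_\sigma$.
   Context: All graphs are finite, simple and undirected. A clique is a set of pairwise adjacent vertices; a set $S$ of cliques of $G$ is a total clique covering if every vertex lies in some member of $S$ and every edge has both endpoints in some member of $S$. For a finite sequence $\sigma=(a_1,\ldots,a_m)$ of positive integers, $G[\sigma]$ is the graph with vertices $v_1,\ldots,v_m$ ($a_i$ the label of $v_i$) where $v_iv_j$ is an edge iff $i\ne j$ and $\gcd(a_i,a_j)>1$. A coding sequence of a graph $G$ with $s\ge0$ isolated vertices: if $G$ has one vertex, $\sigma=(1)$; otherwise, with $G_1$ the graph obtained by deleting isolated vertices, take a non-decreasing finite sequence $\sigma_1$ of square-free integers $>1$ with $G_1\cong G[\sigma_1]$ and prefix it with $s$ entries equal to $1$; then $G\cong G[\sigma]$ with the isolated vertices labelled $1$. $\lambda(\sigma)$ is the lcm of the entries of $\sigma$ greater than $1$. Given a coding sequence $\sigma=(\lambda_1,\ldots,\lambda_m)$ of $G$ with vertices $v_i$ labelled $\lambda_i$, $s$ isolated vertices $v_1,\ldots,v_s$, and $p_1,\ldots,p_k$ the distinct prime factors of $\lambda(\sigma)$, the total clique covering corresponding to $\sigma$ is $S_\sigma=\{\{v_1\},\ldots,\{v_s\}\}\cup\{\{v_i : p_j\mid\lambda_i\} : j=1,\ldots,k\}$. *)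

theory Defs
  imports "HOL-Computational_Algebra.Computational_Algebra"
begin

definition simple_graph :: "'a set \<Rightarrow> ('a \<Rightarrow> 'a \<Rightarrow> bool) \<Rightarrow> bool" where
  "simple_graph V E \<longleftrightarrow> finite V \<and> (\<forall>u v. E u v \<longrightarrow> u \<in> V \<and> v \<in> V)
     \<and> (\<forall>u v. E u v \<longrightarrow> E v u) \<and> (\<forall>v. \<not> E v v)"

definition clique :: "'a set \<Rightarrow> ('a \<Rightarrow> 'a \<Rightarrow> bool) \<Rightarrow> 'a set \<Rightarrow> bool" where
  "clique V E C \<longleftrightarrow> C \<noteq> {} \<and> C \<subseteq> V \<and> (\<forall>x\<in>C. \<forall>y\<in>C. x \<noteq> y \<longrightarrow> E x y)"

definition total_clique_covering :: "'a set \<Rightarrow> ('a \<Rightarrow> 'a \<Rightarrow> bool) \<Rightarrow> 'a set set \<Rightarrow> bool" where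
  "total_clique_covering V E S \<longleftrightarrow> (\<forall>C\<in>S. clique V E C)
     \<and> (\<forall>v\<in>V. \<exists>C\<in>S. v \<in> C)
     \<and> (\<forall>u v. E u v \<longrightarrow> (\<exists>C\<in>S. u \<in> C \<and> v \<in> C))"

definition isolated :: "'a set \<Rightarrow> ('a \<Rightarrow> 'a \<Rightarrow> bool) \<Rightarrow> 'a \<Rightarrow> bool" where
  "isolated V E v \<longleftrightarrow> v \<in> V \<and> (\<forall>u. \<not> E v u)"

text \<open>The graph G[sigma]: vertices are the indices 0..<length sigma (0-based),
  i adjacent to j iff i \<noteq> j and gcd of the labels exceeds 1.\<close>
definition gcd_adj :: "nat list \<Rightarrow> nat \<Rightarrow> nat \<Rightarrow> bool" where
  "gcd_adj \<sigma> i j \<longleftrightarrow> i < length \<sigma> \<and> j < length \<sigma> \<and> i \<noteq> j \<and> gcd (\<sigma> ! i) (\<sigma> ! j) > 1"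

definition graph_iso :: "'a set \<Rightarrow> ('a \<Rightarrow> 'a \<Rightarrow> bool) \<Rightarrow> 'b set \<Rightarrow> ('b \<Rightarrow> 'b \<Rightarrow> bool)
    \<Rightarrow> ('a \<Rightarrow> 'b) \<Rightarrow> bool" where
  "graph_iso V E W F f \<longleftrightarrow> bij_betw f V W \<and> (\<forall>u\<in>V. \<forall>v\<in>V. E u v \<longleftrightarrow> F (f u) (f v))"

definition coding_seq :: "'a set \<Rightarrow> ('a \<Rightarrow> 'a \<Rightarrow> bool) \<Rightarrow> nat list \<Rightarrow> bool" where
  "coding_seq V E \<sigma> \<longleftrightarrow>
     (card V = 1 \<and> \<sigma> = [1]) \<or>
     (card V \<noteq> 1 \<and> (\<exists>\<sigma>1. \<sigma> = replicate (card {v. isolated V E v}) 1 @ \<sigma>1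
        \<and> sorted \<sigma>1 \<and> (\<forall>a\<in>set \<sigma>1. squarefree a \<and> a > 1)
        \<and> (\<exists>g. graph_iso (V - {v. isolated V E v}) E {0..<length \<sigma>1} (gcd_adj \<sigma>1) g)))"

definition lam :: "nat list \<Rightarrow> nat" where
  "lam \<sigma> = Lcm {a \<in> set \<sigma>. a > 1}"

text \<open>S_sigma, on the vertex set 0..<length sigma of G[sigma]: the singletons of
  the vertices labelled 1 (the isolated vertices v_1..v_s), and for each prime
  p dividing lambda(sigma) the set of vertices whose label p divides.\<close>
definition S_sigma :: "nat list \<Rightarrow> nat set set" where
  "S_sigma \<sigma> = {{i} | i. i < length \<sigma> \<and> \<sigma> ! i = 1}
     \<union> {{i. i < length \<sigma> \<and> p dvd \<sigma> ! i} | p. prime p \<and> p dvd lam \<sigma>}"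

end

theory Submission
  imports Defs
begin

lemma idx_props:
  assumes "distinct zs" "v \<in> set zs"
  shows "inv_into {..<length zs} ((!) zs) v < length zs"
    and "zs ! inv_into {..<length zs} ((!) zs) v = v"
proof -
  have b: "bij_betw ((!) zs) {..<length zs} (set zs)" by (rule bij_betw_nth) (use assms in auto)
  have vi: "v \<in> (!) zs ` {..<length zs}" using b assms by (simp add: bij_betw_def)
  show "inv_into {..<length zs} ((!) zs) v < length zs"
    using vi by (meson inv_into_into lessThan_iff)
  show "zs ! inv_into {..<length zs} ((!) zs) v = v"
    using vi by (simp add: f_inv_into_f)
qed

lemma iso_helper:
  assumes d: "distinct zs" and W: "set zs = W"
    and adj: "\<forall>u\<in>W. \<forall>v\<in>W. F u v \<longleftrightarrow> (u \<noteq> v \<and> gcd (L u) (L v) > (1::nat))"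
  shows "graph_iso W F {0..<length (map L zs)} (gcd_adj (map L zs)) (inv_into {..<length zs} ((!) zs))"
proof -
  have b: "bij_betw ((!) zs) {..<length zs} (set zs)" by (rule bij_betw_nth) (use d in auto)
  have b2: "bij_betw (inv_into {..<length zs} ((!) zs)) W {0..<length (map L zs)}"
    using bij_betw_inv_into[OF b] W by (simp add: atLeast0LessThan)
  show ?thesis unfolding graph_iso_def
  proof (intro conjI b2 ballI)
    fix u v assume u: "u \<in> W" and v: "v \<in> W"
    note iu = idx_props[OF d, of u] and iv = idx_props[OF d, of v]
    have "(inv_into {..<length zs} ((!) zs) u = inv_into {..<length zs} ((!) zs) v) \<longleftrightarrow> u = v"
      using iu iv u v W by metis
    then show "F u v = gcd_adj (map L zs) (inv_into {..<length zs} ((!) zs) u) (inv_into {..<length zs} ((!) zs) v)"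
      unfolding gcd_adj_def using iu iv u v W adj by auto
  qed
qed

theorem lemma2:
  fixes V :: "'a set" and E :: "'a \<Rightarrow> 'a \<Rightarrow> bool" and S :: "'a set set"
  assumes "simple_graph V E"
    and "total_clique_covering V E S"
  shows "\<exists>\<sigma> f. coding_seq V E \<sigma>
           \<and> graph_iso V E {0..<length \<sigma>} (gcd_adj \<sigma>) f
           \<and> (\<forall>v\<in>V. isolated V E v \<longleftrightarrow> \<sigma> ! f v = 1)
           \<and> (\<lambda>C. f ` C) ` S = S_sigma \<sigma>"
proof -
  have finV: "finite V" and Ein: "\<And>u v. E u v \<Longrightarrow> u \<in> V \<and> v \<in> V"
    and Esym: "\<And>u v. E u v \<Longrightarrow> E v u" and Eirr: "\<And>v. \<not> E v v"
    using assms(1) unfolding simple_graph_def by auto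
  have cl: "\<And>C. C \<in> S \<Longrightarrow> clique V E C"
    and cov: "\<And>v. v \<in> V \<Longrightarrow> \<exists>C\<in>S. v \<in> C"
    and ecov: "\<And>u v. E u v \<Longrightarrow> \<exists>C\<in>S. u \<in> C \<and> v \<in> C"
    using assms(2) unfolding total_clique_covering_def by auto
  define I where "I = {v. isolated V E v}"
  have IV: "I \<subseteq> V" unfolding I_def isolated_def by auto
  have isoI: "\<And>v. v \<in> I \<longleftrightarrow> v \<in> V \<and> (\<forall>u. \<not> E v u)" unfolding I_def isolated_def by auto
  have SV: "\<And>C. C \<in> S \<Longrightarrow> C \<subseteq> V" and Sne: "\<And>C. C \<in> S \<Longrightarrow> C \<noteq> {}"
    using cl unfolding clique_def by auto
  have single: "\<And>C w. C \<in> S \<Longrightarrow> w \<in> C \<Longrightarrow> w \<in> I \<Longrightarrow> C = {w}"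
  proof -
    fix C w assume C: "C \<in> S" "w \<in> C" "w \<in> I"
    { fix x assume "x \<in> C" "x \<noteq> w"
      then have "E w x" using cl[OF C(1)] C(2) unfolding clique_def by auto
      then have False using C(3) isoI by auto }
    then show "C = {w}" using C by auto
  qed
  define S' where "S' = {C\<in>S. C \<inter> I = {}}"
  have finS: "finite S" using finV SV by (meson Pow_iff finite_Pow_iff finite_subset subsetI)
  have finS': "finite S'" unfolding S'_def using finS by auto
  have infp: "infinite {p::nat. prime p}" by (rule primes_infinite)
  obtain B where B: "finite B" "card B = card S'" "B \<subseteq> {p::nat. prime p}"
    using infinite_arbitrarily_large[OF infp] by blast
  obtain P where P: "inj_on P S'" "P ` S' \<subseteq> B"
    using inj_on_iff_card_le[OF finS' B(1)] B(2) by auto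
  have Pp: "\<And>C. C \<in> S' \<Longrightarrow> prime (P C)" using P B by auto
  define L where "L v = (\<Prod>C\<in>{C\<in>S'. v \<in> C}. P C)" for v
  have finv: "\<And>v. finite {C\<in>S'. v \<in> C}" using finS' by auto
  have Lpos: "\<And>v. L v > 0" unfolding L_def using Pp finv
    by (simp add: prime_gt_0_nat prod_pos)
  have pdvd: "\<And>q v. prime q \<Longrightarrow> q dvd L v \<longleftrightarrow> (\<exists>C\<in>S'. v \<in> C \<and> q = P C)"
  proof -
    fix q v assume q: "prime (q::nat)"
    have "q dvd L v \<longleftrightarrow> (\<exists>C\<in>{C\<in>S'. v \<in> C}. q dvd P C)"
      unfolding L_def by (rule prime_dvd_prod_iff[OF finv q])
    also have "\<dots> \<longleftrightarrow> (\<exists>C\<in>S'. v \<in> C \<and> q = P C)"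
      using Pp q primes_dvd_imp_eq by auto
    finally show "q dvd L v \<longleftrightarrow> (\<exists>C\<in>S'. v \<in> C \<and> q = P C)" .
  qed
  have inS': "\<And>C u v. C \<in> S \<Longrightarrow> u \<in> C \<Longrightarrow> E u v \<Longrightarrow> C \<in> S'"
  proof -
    fix C u v assume C: "C \<in> S" "u \<in> C" "E u v"
    { fix w assume w: "w \<in> C" "w \<in> I"
      then have "C = {w}" using single C by auto
      then have "u = w" using C by auto
      then have False using w C isoI by auto }
    then show "C \<in> S'" unfolding S'_def using C by auto
  qed
  have L1: "\<And>v. v \<in> V \<Longrightarrow> L v = 1 \<longleftrightarrow> v \<in> I"
  proof -
    fix v assume v: "v \<in> V"
    show "L v = 1 \<longleftrightarrow> v \<in> I"
    proof
      assume "v \<in> I"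
      then have e: "{C\<in>S'. v \<in> C} = {}" unfolding S'_def by auto
      show "L v = 1" unfolding L_def e by simp
    next
      assume L: "L v = 1"
      show "v \<in> I"
      proof (rule ccontr)
        assume "v \<notin> I"
        then obtain u where "E v u" using isoI v by auto
        then obtain C where C: "C \<in> S" "v \<in> C" "u \<in> C" using ecov by blast
        then have "C \<in> S'" using inS' \<open>E v u\<close> by blast
        then have "P C dvd L v" using pdvd Pp C by blast
        then show False using L Pp[OF \<open>C \<in> S'\<close>] by (simp add: prime_nat_iff)
      qed
    qed
  qed
  have adj: "\<forall>u\<in>V. \<forall>v\<in>V. E u v \<longleftrightarrow> (u \<noteq> v \<and> gcd (L u) (L v) > 1)"
  proof (intro ballI iffI)
    fix u v assume u: "u \<in> V" and v: "v \<in> V" and e: "E u v"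
    then obtain C where C: "C \<in> S" "u \<in> C" "v \<in> C" using ecov by blast
    then have C': "C \<in> S'" using inS' e by blast
    have "P C dvd gcd (L u) (L v)" using pdvd Pp C C' by auto
    moreover have "gcd (L u) (L v) > 0" using Lpos by simp
    ultimately have "P C \<le> gcd (L u) (L v)" by (simp add: dvd_imp_le)
    moreover have "P C > 1" using Pp[OF C'] prime_gt_1_nat by blast
    moreover have "u \<noteq> v" using e Eirr by metis
    ultimately show "u \<noteq> v \<and> gcd (L u) (L v) > 1" by linarith
  next
    fix u v assume u: "u \<in> V" and v: "v \<in> V" and g: "u \<noteq> v \<and> gcd (L u) (L v) > 1"
    then obtain q where q: "prime q" "q dvd gcd (L u) (L v)" using prime_factor_nat[of "gcd (L u) (L v)"] by auto
    then obtain C where C: "C \<in> S'" "u \<in> C" "q = P C" using pdvd by auto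
    obtain C2 where C2: "C2 \<in> S'" "v \<in> C2" "q = P C2" using pdvd q by auto
    have "C = C2" using P(1) C C2 by (metis inj_onD)
    then show "E u v" using C C2 g cl unfolding S'_def clique_def by auto
  qed
  have sqf: "\<And>v. squarefree (L v)" unfolding L_def
  proof (rule squarefree_prod_coprime)
    fix v a b assume a: "a \<in> {C\<in>S'. v \<in> C}" and b: "b \<in> {C\<in>S'. v \<in> C}" and ab: "a \<noteq> b"
    then have "P a \<noteq> P b" using P(1) by (auto dest: inj_onD)
    then show "coprime (P a) (P b)" using Pp a b by (intro primes_coprime) auto
  next
    fix v a assume "a \<in> {C\<in>S'. v \<in> C}"
    then show "squarefree (P a)" using Pp by (intro squarefree_prime) auto
  qed
  define N where "N = V - I"
  obtain isl where isl: "set isl = I" "distinct isl" using finite_distinct_list finV IV finite_subset by metis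
  obtain ws where ws: "set ws = N" "distinct ws" using finite_distinct_list finV N_def by (metis finite_Diff)
  define ws' where "ws' = sort_key L ws"
  have ws': "set ws' = N" "distinct ws'" "sorted (map L ws')" using ws unfolding ws'_def by auto
  define zs where "zs = isl @ ws'"
  have zs: "set zs = V" "distinct zs" unfolding zs_def using isl ws' IV N_def by auto
  define \<sigma> where "\<sigma> = map L zs"
  define f where "f = inv_into {..<length zs} ((!) zs)"
  have iso: "graph_iso V E {0..<length \<sigma>} (gcd_adj \<sigma>) f"
    unfolding \<sigma>_def f_def by (rule iso_helper[OF zs(2,1) adj])
  have fv: "\<And>v. v \<in> V \<Longrightarrow> f v < length \<sigma> \<and> \<sigma> ! f v = L v \<and> zs ! f v = v"
    unfolding f_def \<sigma>_def using idx_props[OF zs(2)] zs(1) by auto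
  have card1: "card I = length isl" using isl distinct_card by metis
  have h1: "\<forall>x\<in>set isl. L x = 1" using isl L1 IV by auto
  have rep: "map L isl = replicate (length isl) 1"
    using h1 by (induction isl) auto
  have adjN: "\<forall>u\<in>N. \<forall>v\<in>N. E u v \<longleftrightarrow> (u \<noteq> v \<and> gcd (L u) (L v) > 1)"
    using adj N_def by auto
  have cs: "coding_seq V E \<sigma>"
  proof (cases "card V = 1")
    case True
    then obtain v where "V = {v}" by (meson card_1_singletonE)
    have "length zs = 1" using zs True distinct_card by metis
    then obtain x where "zs = [x]" by (cases zs) auto
    then have "zs = [v]" using zs \<open>V = {v}\<close> by auto
    then have "\<sigma> = [1]" using L1 \<open>V = {v}\<close> Eirr isoI \<sigma>_def Ein by auto
    then show ?thesis using True unfolding coding_seq_def by simp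
  next
    case False
    have "\<sigma> = replicate (card {v. isolated V E v}) 1 @ map L ws'"
      unfolding \<sigma>_def zs_def using rep card1 I_def by simp
    moreover have "\<forall>a\<in>set (map L ws'). squarefree a \<and> a > 1"
    proof
      fix a assume "a \<in> set (map L ws')"
      then obtain v where v: "v \<in> N" "a = L v" using ws'(1) by auto
      then have "L v \<noteq> 1" using L1 N_def by auto
      then show "squarefree a \<and> a > 1" using v Lpos[of v] sqf by (simp add: nat_neq_iff)
    qed
    moreover have "graph_iso (V - {v. isolated V E v}) E {0..<length (map L ws')} (gcd_adj (map L ws'))
        (inv_into {..<length ws'} ((!) ws'))"
      using iso_helper[OF ws'(2,1) adjN] N_def I_def by simp
    ultimately show ?thesis using False ws'(3) unfolding coding_seq_def by blast
  qed
  have isof: "\<forall>v\<in>V. isolated V E v \<longleftrightarrow> \<sigma> ! f v = 1"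
    using fv L1 I_def by auto
  have lenz: "length \<sigma> = length zs" unfolding \<sigma>_def by simp
  have fzs: "\<And>i. i < length zs \<Longrightarrow> f (zs ! i) = i \<and> zs ! i \<in> V \<and> \<sigma> ! i = L (zs ! i)"
  proof -
    fix i assume i: "i < length zs"
    have "inj_on ((!) zs) {..<length zs}" using zs(2) by (simp add: inj_on_nth)
    then have "f (zs ! i) = i" unfolding f_def using i by (simp add: inv_into_f_f)
    then show "f (zs ! i) = i \<and> zs ! i \<in> V \<and> \<sigma> ! i = L (zs ! i)"
      using i zs(1) nth_mem \<sigma>_def by auto
  qed
  have setC: "\<And>C. C \<in> S' \<Longrightarrow> {i. i < length \<sigma> \<and> P C dvd \<sigma> ! i} = f ` C"
  proof -
    fix C assume C: "C \<in> S'"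
    show "{i. i < length \<sigma> \<and> P C dvd \<sigma> ! i} = f ` C"
    proof
      show "{i. i < length \<sigma> \<and> P C dvd \<sigma> ! i} \<subseteq> f ` C"
      proof
        fix i assume "i \<in> {i. i < length \<sigma> \<and> P C dvd \<sigma> ! i}"
        then have i: "i < length zs" "P C dvd L (zs ! i)" using lenz fzs by auto
        then obtain C2 where C2: "C2 \<in> S'" "zs ! i \<in> C2" "P C = P C2"
          using pdvd[OF Pp[OF C]] by blast
        then have "C2 = C" using P(1) C by (metis inj_onD)
        then show "i \<in> f ` C" using C2 fzs[OF i(1)] by (metis image_eqI)
      qed
    next
      show "f ` C \<subseteq> {i. i < length \<sigma> \<and> P C dvd \<sigma> ! i}"
      proof
        fix i assume "i \<in> f ` C"
        then obtain w where w: "w \<in> C" "i = f w" by auto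
        have wV: "w \<in> V" using w C SV unfolding S'_def by auto
        have "P C dvd L w" using pdvd[OF Pp[OF C]] w C by blast
        then show "i \<in> {i. i < length \<sigma> \<and> P C dvd \<sigma> ! i}" using fv[OF wV] w by auto
      qed
    qed
  qed
  have Seq: "(\<lambda>C. f ` C) ` S = S_sigma \<sigma>"
  proof
    show "(\<lambda>C. f ` C) ` S \<subseteq> S_sigma \<sigma>"
    proof
      fix X assume "X \<in> (\<lambda>C. f ` C) ` S"
      then obtain C where C: "C \<in> S" "X = f ` C" by auto
      show "X \<in> S_sigma \<sigma>"
      proof (cases "C \<inter> I = {}")
        case False
        then obtain w where w: "w \<in> C" "w \<in> I" by auto
        then have "C = {w}" using single C by auto
        then have "X = {f w}" using C by auto
        moreover have "f w < length \<sigma> \<and> \<sigma> ! f w = 1" using fv L1 w IV by auto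
        ultimately show ?thesis unfolding S_sigma_def by blast
      next
        case True
        then have C': "C \<in> S'" unfolding S'_def using C by auto
        obtain w where w: "w \<in> C" using Sne C by auto
        have wV: "w \<in> V" using w C SV by auto
        have wI: "w \<notin> I" using w True by auto
        have "L w \<noteq> 1" using wV wI L1 by auto
        then have "L w > 1" using Lpos[of w] by linarith
        then have "L w \<in> {a \<in> set \<sigma>. a > 1}"
          using wV zs(1) \<sigma>_def by auto
        then have "L w dvd lam \<sigma>" unfolding lam_def by (rule dvd_Lcm)
        moreover have "P C dvd L w" using pdvd[OF Pp[OF C']] w C' by blast
        ultimately have "P C dvd lam \<sigma>" by (rule dvd_trans[rotated])
        then show ?thesis unfolding S_sigma_def using setC[OF C'] C(2) Pp[OF C'] by blast
      qed
    qed
  next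
    show "S_sigma \<sigma> \<subseteq> (\<lambda>C. f ` C) ` S"
    proof
      fix X assume "X \<in> S_sigma \<sigma>"
      then consider (a) i where "X = {i}" "i < length \<sigma>" "\<sigma> ! i = 1"
        | (b) p where "X = {i. i < length \<sigma> \<and> p dvd \<sigma> ! i}" "prime p" "p dvd lam \<sigma>"
        unfolding S_sigma_def by blast
      then show "X \<in> (\<lambda>C. f ` C) ` S"
      proof cases
        case a
        then have i: "i < length zs" using lenz by simp
        have wV: "zs ! i \<in> V" and wL: "L (zs ! i) = 1" using fzs[OF i] a by auto
        then have wI: "zs ! i \<in> I" using L1 by auto
        obtain C where C: "C \<in> S" "zs ! i \<in> C" using cov[OF wV] by blast
        then have "C = {zs ! i}" using single wI by auto
        then have "f ` C = X" using a fzs[OF i] by auto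
        then show ?thesis using C by blast
      next
        case b
        define A where "A = {a \<in> set \<sigma>. a > 1}"
        have finA: "finite A" unfolding A_def by auto
        have "Lcm A dvd \<Prod>A" by (rule Lcm_least) (use finA in auto)
        then have "p dvd \<Prod>A" using b unfolding lam_def A_def by (metis dvd_trans)
        then obtain a where a: "a \<in> A" "p dvd a" using prime_dvd_prod_iff[OF finA b(2)] by auto
        then obtain w where w: "w \<in> set zs" "a = L w" unfolding A_def \<sigma>_def by auto
        then obtain C where C: "C \<in> S'" "p = P C" using pdvd b(2) a by blast
        then have "X = f ` C" using setC b(1) by auto
        then show ?thesis using C unfolding S'_def by auto
      qed
    qed
  qed
  show ?thesis using cs iso isof Seq by blast
qed

end
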